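(* For every $\varepsilon>0$ there exist instances of Maximum Vertex Coverage in which the graph is bipartite and has a vertex cover of size $k$ (so the optimum covers all edges), but the greedy algorithm's output covers at most a $\left(1-\frac1e+\varepsilon\right)$ fraction of the edges.
   Context: Maximum Vertex Coverage: given a graph $G$ and a positive integer $k$, choose $k$ vertices so as to maximize the number of edges having at least one endpoint among the chosen vertices. (This is the special case of Maximum Coverage in which each element belongs to exactly two sets.) The greedy algorithm chooses $k$ vertices sequentially, each new vertex maximizing the number of edges it covers that are not yet covered by previously chosen vertices. *)

theory Defs
  imports Complex_Main
begin

definition simple_graph :: "'a set \<Rightarrow> 'a set set \<Rightarrow> bool" where
  "simple_graph V E \<longleftrightarrow> finite V \<and> (\<forall>e\<in>E. e \<subseteq> V \<and> card e = 2)"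

definition bipartite :: "'a set \<Rightarrow> 'a set set \<Rightarrow> bool" where
  "bipartite V E \<longleftrightarrow> (\<exists>A B. A \<union> B = V \<and> A \<inter> B = {} \<and>
      (\<forall>e\<in>E. card (e \<inter> A) = 1 \<and> card (e \<inter> B) = 1))"

definition covered :: "'a set set \<Rightarrow> 'a set \<Rightarrow> 'a set set" where
  "covered E S = {e \<in> E. e \<inter> S \<noteq> {}}"

definition vertex_cover :: "'a set set \<Rightarrow> 'a set \<Rightarrow> bool" where
  "vertex_cover E C \<longleftrightarrow> covered E C = E"

definition gain :: "'a set set \<Rightarrow> 'a set \<Rightarrow> 'a \<Rightarrow> nat" where
  "gain E S v = card (covered E (insert v S)) - card (covered E S)"

text \<open>vs is a possible run of the greedy algorithm (any tie-breaking):
  each chosen vertex is a new vertex maximizing the number of newly covered edges.\<close>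
definition greedy_run :: "'a set \<Rightarrow> 'a set set \<Rightarrow> 'a list \<Rightarrow> bool" where
  "greedy_run V E vs \<longleftrightarrow> distinct vs \<and> set vs \<subseteq> V \<and>
     (\<forall>i < length vs. \<forall>u \<in> V - set (take i vs).
        gain E (set (take i vs)) u \<le> gain E (set (take i vs)) (vs ! i))"

end

theory Submission imports Defs "HOL-Library.Nat_Bijection" begin

definition cv :: "nat \<Rightarrow> nat" where "cv j = 3*j"
definition dv :: "nat \<Rightarrow> nat \<Rightarrow> nat" where "dv p i = 3 * prod_encode (p,i) + 1"
definition lv :: "nat \<Rightarrow> nat \<Rightarrow> nat" where "lv j l = 3 * prod_encode (j,l) + 2"

lemma cv_dv[simp]: "cv j \<noteq> dv p i" "dv p i \<noteq> cv j" unfolding cv_def dv_def by presburger+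
lemma cv_lv[simp]: "cv j \<noteq> lv p i" "lv p i \<noteq> cv j" unfolding cv_def lv_def by presburger+
lemma dv_lv[simp]: "dv j i \<noteq> lv p l" "lv p l \<noteq> dv j i" unfolding dv_def lv_def by presburger+
lemma cv_eq[simp]: "cv j = cv j' \<longleftrightarrow> j = j'" unfolding cv_def by simp
lemma dv_eq[simp]: "dv p i = dv p' i' \<longleftrightarrow> p = p' \<and> i = i'" unfolding dv_def by simp
lemma lv_eq[simp]: "lv p i = lv p' i' \<longleftrightarrow> p = p' \<and> i = i'" unfolding lv_def by simp

definition oth :: "nat \<Rightarrow> nat \<Rightarrow> nat \<Rightarrow> nat \<Rightarrow> nat" where
  "oth D R j x = (if x < R then dv x (j div (D+1-x)) else lv j (x-R))"

lemma oth_ne_cv[simp]: "oth D R j x \<noteq> cv j'" "cv j' \<noteq> oth D R j x"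
  unfolding oth_def by auto

definition edge :: "nat \<Rightarrow> nat \<Rightarrow> nat \<Rightarrow> nat \<Rightarrow> nat set" where
  "edge D R j x = {cv j, oth D R j x}"

lemma edge_card[simp]: "card (edge D R j x) = 2"
  unfolding edge_def by simp

lemma edge_eq: assumes "edge D R j x = edge D R j' x'" and "x < D" "x' < D"
  shows "j = j' \<and> x = x'"
proof -
  have "cv j \<in> edge D R j' x'" by (metis assms(1) edge_def insertI1)
  hence jj: "j = j'" by (simp add: edge_def)
  have "oth D R j x \<in> edge D R j' x'" by (metis assms(1) edge_def insertI1 insertI2)
  hence "oth D R j x = oth D R j x'" using jj by (simp add: edge_def)
  hence "x = x'" unfolding oth_def by (auto split: if_splits)
  with jj show ?thesis by simp
qed

definition Edges where "Edges D R K = (\<lambda>(j,x). edge D R j x) ` ({..<K} \<times> {..<D})"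
definition Dset where "Dset D R K = (\<lambda>(p,i). dv p i) ` (SIGMA p:{..<R}. {..<K div (D+1-p)})"
definition Cset where "Cset K = cv ` {..<K}"
definition Lset where "Lset D R K = (\<lambda>(j,l). lv j l) ` ({..<K} \<times> {..<D-R})"
definition Vset where "Vset D R K = Cset K \<union> Dset D R K \<union> Lset D R K"

lemma finite_Edges[simp]: "finite (Edges D R K)" unfolding Edges_def by simp
lemma finite_Vset[simp]: "finite (Vset D R K)" unfolding Vset_def Cset_def Dset_def Lset_def by simp

lemma card_Edges: "card (Edges D R K) = K * D"
proof -
  have "inj_on (\<lambda>(j,x). edge D R j x) ({..<K} \<times> {..<D})"
    by (auto simp: inj_on_def dest: edge_eq)
  thus ?thesis unfolding Edges_def by (simp add: card_image card_cartesian_product)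
qed

lemma card_Dset: "card (Dset D R K) = (\<Sum>p<R. K div (D+1-p))"
proof -
  have "inj_on (\<lambda>(p,i). dv p i) (SIGMA p:{..<R}. {..<K div (D+1-p)})"
    by (auto simp: inj_on_def)
  thus ?thesis unfolding Dset_def by (simp add: card_image)
qed

lemma card_Cset: "card (Cset K) = K" unfolding Cset_def by (simp add: card_image inj_on_def)

lemma gain_eq: assumes "finite E"
  shows "gain E S u = card {e\<in>E. u \<in> e \<and> e \<inter> S = {}}"
proof -
  have "covered E (insert u S) = covered E S \<union> {e\<in>E. u \<in> e \<and> e \<inter> S = {}}"
    unfolding covered_def by auto
  moreover have "covered E S \<inter> {e\<in>E. u \<in> e \<and> e \<inter> S = {}} = {}"
    unfolding covered_def by auto
  moreover have "finite (covered E S)" using assms unfolding covered_def by simp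
  ultimately show ?thesis unfolding gain_def using assms by (simp add: card_Un_disjoint)
qed

lemma div_less_div: "(L::nat) dvd K \<Longrightarrow> 0 < L \<Longrightarrow> j < K \<Longrightarrow> j div L < K div L"
  by (metis dvd_div_mult_self less_mult_imp_div_less)


locale constr = fixes D R K :: nat
  assumes R1: "1 \<le> R" and RD: "R \<le> D" and dvK: "\<And>p. p<R \<Longrightarrow> (D+1-p) dvd K"
    and Kcard: "K \<le> card (Dset D R K)"
begin

abbreviation "E \<equiv> Edges D R K"
abbreviation "V \<equiv> Vset D R K"
abbreviation "DD \<equiv> Dset D R K"

lemma oth_in_V: "j < K \<Longrightarrow> x < D \<Longrightarrow> oth D R j x \<in> V"
proof -
  assume j: "j < K" and x: "x < D"
  show ?thesis
  proof (cases "x < R")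
    case True
    have "j div (D+1-x) < K div (D+1-x)" using div_less_div[OF dvK[OF True] _ j] True RD by simp
    hence "dv x (j div (D+1-x)) \<in> DD" unfolding Dset_def using True by force
    thus ?thesis using True unfolding oth_def Vset_def by simp
  next
    case False
    hence "lv j (x-R) \<in> Lset D R K" unfolding Lset_def using j x by force
    thus ?thesis using False unfolding oth_def Vset_def by simp
  qed
qed

lemma cv_in_V: "j < K \<Longrightarrow> cv j \<in> V" unfolding Vset_def Cset_def by simp

lemma edge_sub_V: "e \<in> E \<Longrightarrow> e \<subseteq> V"
  unfolding Edges_def edge_def using oth_in_V cv_in_V by auto

lemma cv_notin_D[simp]: "cv j \<notin> DD" unfolding Dset_def by auto
lemma lv_notin_D[simp]: "lv j l \<notin> DD" unfolding Dset_def by auto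

lemma exists_p0:
  assumes "S \<subseteq> DD" "card S < card DD"
  shows "\<exists>p0 i0. p0 < R \<and> i0 < K div (D+1-p0) \<and> dv p0 i0 \<notin> S \<and>
           (\<forall>x<p0. \<forall>i<K div (D+1-x). dv x i \<in> S)"
proof -
  have "DD - S \<noteq> {}"
  proof
    assume "DD - S = {}"
    hence "DD = S" using assms(1) by blast
    thus False using assms(2) by simp
  qed
  then obtain p i where pi: "p < R" "i < K div (D+1-p)" "dv p i \<notin> S"
    unfolding Dset_def by auto
  let ?P = "\<lambda>p. p < R \<and> (\<exists>i. i < K div (D+1-p) \<and> dv p i \<notin> S)"
  have "\<exists>p. ?P p" using pi by blast
  hence "\<exists>n. ?P n \<and> (\<forall>m<n. \<not> ?P m)" by (rule exists_least_iff[THEN iffD1])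
  then obtain p0 where p0: "?P p0" "\<forall>m<p0. \<not> ?P m" by blast
  then obtain i0 where "i0 < K div (D+1-p0)" "dv p0 i0 \<notin> S" by blast
  moreover have "\<forall>x<p0. \<forall>i<K div (D+1-x). dv x i \<in> S"
  proof (intro allI impI)
    fix x i assume x: "x < p0" and i: "i < K div (D+1-x)"
    have "x < R" using x p0(1) by simp
    thus "dv x i \<in> S" using p0(2) x i by blast
  qed
  ultimately show ?thesis using p0 by blast
qed

lemma gain_d:
  assumes S: "S \<subseteq> DD" and p: "p < R" and i: "i < K div (D+1-p)" and nS: "dv p i \<notin> S"
  shows "D + 1 - p \<le> gain E S (dv p i)"
proof -
  let ?L = "D+1-p"
  have Lpos: "0 < ?L" using p RD by simp
  have "Suc i \<le> K div ?L" using i by simp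
  hence "Suc i * ?L \<le> K div ?L * ?L" by (rule mult_right_mono) simp
  also have "\<dots> = K" using dvK[OF p] by simp
  finally have iK: "i * ?L + ?L \<le> K" by simp
  have sub: "(\<lambda>j. edge D R j p) ` {i*?L..<i*?L+?L} \<subseteq> {e\<in>E. dv p i \<in> e \<and> e \<inter> S = {}}"
  proof
    fix e assume "e \<in> (\<lambda>j. edge D R j p) ` {i*?L..<i*?L+?L}"
    then obtain j where j: "i*?L \<le> j" "j < i*?L+?L" and e: "e = edge D R j p" by auto
    have jd: "j div ?L = i" using j Lpos
      by (metis add.commute div_nat_eqI mult.commute mult_Suc_right)
    have "j < K" using j iK by simp
    moreover have "p < D" using p RD by simp
    ultimately have "e \<in> E" unfolding Edges_def e by force
    moreover have "oth D R j p = dv p i" using jd p unfolding oth_def by simp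
    ultimately show "e \<in> {e\<in>E. dv p i \<in> e \<and> e \<inter> S = {}}"
      unfolding e edge_def using S nS by auto
  qed
  have inj: "inj_on (\<lambda>j. edge D R j p) {i*?L..<i*?L+?L}"
    using p RD by (auto simp: inj_on_def dest: edge_eq)
  have "?L = card ((\<lambda>j. edge D R j p) ` {i*?L..<i*?L+?L})"
    using card_image[OF inj] by simp
  also have "\<dots> \<le> card {e\<in>E. dv p i \<in> e \<and> e \<inter> S = {}}"
    by (rule card_mono[OF _ sub]) simp
  finally show ?thesis by (simp add: gain_eq)
qed

lemma gain_c:
  assumes all: "\<forall>x<p0. \<forall>i<K div (D+1-x). dv x i \<in> S" and p0: "p0 < R" and j: "j < K"
  shows "gain E S (cv j) \<le> D - p0"
proof -
  have sub: "{e\<in>E. cv j \<in> e \<and> e \<inter> S = {}} \<subseteq> (\<lambda>x. edge D R j x) ` {p0..<D}"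
  proof
    fix e assume "e \<in> {e\<in>E. cv j \<in> e \<and> e \<inter> S = {}}"
    then obtain j' x where e: "e = edge D R j' x" "j' < K" "x < D" and c: "cv j \<in> e"
      and dis: "e \<inter> S = {}" unfolding Edges_def by auto
    have jj: "j' = j" using c e by (simp add: edge_def)
    have "\<not> x < p0"
    proof
      assume xp: "x < p0"
      hence "x < R" using p0 by simp
      have "j div (D+1-x) < K div (D+1-x)" using div_less_div[OF dvK[OF \<open>x<R\<close>] _ j] \<open>x<R\<close> RD by simp
      hence "dv x (j div (D+1-x)) \<in> S" using all xp by blast
      moreover have "dv x (j div (D+1-x)) \<in> e" using e jj \<open>x<R\<close> by (simp add: edge_def oth_def)
      ultimately show False using dis by blast
    qed
    thus "e \<in> (\<lambda>x. edge D R j x) ` {p0..<D}" using e jj by auto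
  qed
  have "card {e\<in>E. cv j \<in> e \<and> e \<inter> S = {}} \<le> card ((\<lambda>x. edge D R j x) ` {p0..<D})"
    by (rule card_mono[OF _ sub]) simp
  also have "\<dots> \<le> card {p0..<D}" by (rule card_image_le) simp
  finally show ?thesis by (simp add: gain_eq)
qed

lemma gain_l: "gain E S (lv j l) \<le> 1"
proof -
  have sub: "{e\<in>E. lv j l \<in> e \<and> e \<inter> S = {}} \<subseteq> {edge D R j (R+l)}"
  proof
    fix e assume "e \<in> {e\<in>E. lv j l \<in> e \<and> e \<inter> S = {}}"
    then obtain j' x where e: "e = edge D R j' x" and c: "lv j l \<in> e"
      unfolding Edges_def by auto
    hence "oth D R j' x = lv j l" by (auto simp: edge_def)
    hence "\<not> x < R" "j' = j" "x - R = l" by (auto simp: oth_def split: if_splits)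
    hence "x = R + l" "j' = j" by linarith+
    thus "e \<in> {edge D R j (R+l)}" using e by simp
  qed
  have "card {e\<in>E. lv j l \<in> e \<and> e \<inter> S = {}} \<le> card {edge D R j (R+l)}"
    by (rule card_mono[OF _ sub]) simp
  thus ?thesis by (simp add: gain_eq)
qed

lemma greedy_in_D:
  assumes g: "greedy_run V E vs" and len: "length vs \<le> K"
  shows "set vs \<subseteq> DD"
proof -
  have "\<forall>i<length vs. vs ! i \<in> DD"
  proof (intro allI)
    fix i show "i < length vs \<longrightarrow> vs ! i \<in> DD"
    proof (induction i rule: less_induct)
      case (less i)
      show ?case
      proof
        assume il: "i < length vs"
        let ?S = "set (take i vs)"
        have SD: "?S \<subseteq> DD"
        proof
          fix v assume "v \<in> ?S"
          then obtain i' where "i' < length (take i vs)" "take i vs ! i' = v"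
            by (metis in_set_conv_nth)
          thus "v \<in> DD" using less il by auto
        qed
        have "card ?S = i" using g il unfolding greedy_run_def
          by (simp add: distinct_card)
        hence "card ?S < card DD" using il len Kcard by simp
        then obtain p0 i0 where P: "p0 < R" "i0 < K div (D+1-p0)" "dv p0 i0 \<notin> ?S"
          "\<forall>x<p0. \<forall>i<K div (D+1-x). dv x i \<in> ?S" using exists_p0[OF SD] by blast
        have "dv p0 i0 \<in> DD" unfolding Dset_def using P by force
        hence "dv p0 i0 \<in> V - ?S" using P unfolding Vset_def by simp
        hence ge: "gain E ?S (dv p0 i0) \<le> gain E ?S (vs ! i)"
          using g il unfolding greedy_run_def by blast
        have lo: "D + 1 - p0 \<le> gain E ?S (dv p0 i0)" using gain_d[OF SD P(1,2,3)] .
        show "vs ! i \<in> DD"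
        proof (rule ccontr)
          assume nd: "vs ! i \<notin> DD"
          have "vs ! i \<in> V" using g il unfolding greedy_run_def by auto
          hence "vs ! i \<in> Cset K \<or> vs ! i \<in> Lset D R K" using nd unfolding Vset_def by auto
          hence "gain E ?S (vs ! i) \<le> D - p0"
          proof
            assume "vs ! i \<in> Cset K"
            then obtain j where "j < K" "vs ! i = cv j" unfolding Cset_def by auto
            thus ?thesis using gain_c[OF P(4) P(1)] by simp
          next
            assume "vs ! i \<in> Lset D R K"
            then obtain j l where "vs ! i = lv j l" unfolding Lset_def by auto
            thus ?thesis using gain_l[of ?S j l] P(1) RD by simp
          qed
          thus False using ge lo P(1) RD by simp
        qed
      qed
    qed
  qed
  thus ?thesis by (metis in_set_conv_nth subsetI)
qed

lemma covered_bound: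
  assumes "set vs \<subseteq> DD"
  shows "card (covered E (set vs)) \<le> K * R"
proof -
  have "covered E (set vs) \<subseteq> (\<lambda>(j,x). edge D R j x) ` ({..<K} \<times> {..<R})"
  proof
    fix e assume "e \<in> covered E (set vs)"
    then obtain j x where e: "e = edge D R j x" "j < K" "x < D" and ne: "e \<inter> set vs \<noteq> {}"
      unfolding covered_def Edges_def by auto
    have "x < R"
    proof (rule ccontr)
      assume "\<not> x < R"
      hence "e = {cv j, lv j (x-R)}" using e by (simp add: edge_def oth_def)
      thus False using ne assms by auto
    qed
    thus "e \<in> (\<lambda>(j,x). edge D R j x) ` ({..<K} \<times> {..<R})" using e by force
  qed
  hence "card (covered E (set vs)) \<le> card ((\<lambda>(j,x). edge D R j x) ` ({..<K} \<times> {..<R}))"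
    by (rule card_mono[rotated]) simp
  also have "\<dots> \<le> card ({..<K} \<times> {..<R})" by (rule card_image_le) simp
  finally show ?thesis by (simp add: card_cartesian_product)
qed

lemma props:
  "simple_graph V E \<and> bipartite V E \<and> vertex_cover E (Cset K) \<and> Cset K \<subseteq> V \<and> card (Cset K) = K"
proof -
  have sg: "simple_graph V E" unfolding simple_graph_def using edge_sub_V
    by (auto simp: Edges_def)
  have b3: "\<forall>e\<in>E. card (e \<inter> Cset K) = 1 \<and> card (e \<inter> (V - Cset K)) = 1"
  proof
    fix e assume "e \<in> E"
    then obtain j x where e: "e = edge D R j x" "j < K" "x < D" unfolding Edges_def by auto
    have o: "oth D R j x \<notin> Cset K" unfolding Cset_def by auto
    have "e \<inter> Cset K = {cv j}" using e o unfolding edge_def Cset_def by auto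
    moreover have "e \<inter> (V - Cset K) = {oth D R j x}" using e o oth_in_V[OF e(2,3)]
      unfolding edge_def Cset_def by auto
    ultimately show "card (e \<inter> Cset K) = 1 \<and> card (e \<inter> (V - Cset K)) = 1" by simp
  qed
  have b1: "Cset K \<union> (V - Cset K) = V" unfolding Vset_def by auto
  have "bipartite V E" unfolding bipartite_def
    by (rule exI[of _ "Cset K"], rule exI[of _ "V - Cset K"]) (use b1 b3 in blast)
  moreover have "vertex_cover E (Cset K)" unfolding vertex_cover_def covered_def
    by (auto simp: Edges_def edge_def Cset_def)
  moreover have "Cset K \<subseteq> V" unfolding Vset_def by auto
  ultimately show ?thesis using sg card_Cset by simp
qed

end

lemma harm: "R \<le> D+1 \<Longrightarrow> ln (real D + 2) - ln (real D + 2 - real R) \<le> (\<Sum>p<R. 1 / real (D+1-p))"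
proof (induction R)
  case 0 then show ?case by simp
next
  case (Suc R)
  hence RD: "R \<le> D" by simp
  define m where "m = real D + 1 - real R"
  have m1: "1 \<le> m" using RD unfolding m_def by simp
  have "ln (m+1) - ln m = ln ((m+1)/m)" using m1 by (simp add: ln_div)
  also have "\<dots> \<le> (m+1)/m - 1" using m1 by (intro ln_le_minus_one) simp
  also have "\<dots> = 1/m" using m1 by (simp add: field_simps)
  finally have st: "ln (m+1) - ln m \<le> 1/m" .
  have a: "real (D+1-R) = m" using RD unfolding m_def by simp
  have b: "real D + 2 - real R = m + 1" unfolding m_def by simp
  have c: "real D + 2 - real (Suc R) = m" unfolding m_def by simp
  have IH: "ln (real D + 2) - ln (m+1) \<le> (\<Sum>p<R. 1 / real (D+1-p))"
    using Suc.IH RD b by simp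
  have s: "(\<Sum>p<Suc R. 1 / real (D+1-p)) = (\<Sum>p<R. 1 / real (D+1-p)) + 1/m"
    using a by simp
  show ?case unfolding c s using IH st by linarith
qed

theorem lemma5p1:
  fixes \<epsilon> :: real
  assumes "\<epsilon> > 0"
  shows "\<exists>(V :: nat set) E (k :: nat).
           simple_graph V E \<and> bipartite V E \<and> E \<noteq> {} \<and> k > 0 \<and>
           (\<exists>C \<subseteq> V. card C = k \<and> vertex_cover E C) \<and>
           (\<forall>vs. greedy_run V E vs \<and> length vs = k \<longrightarrow>
              real (card (covered E (set vs))) \<le> (1 - 1 / exp 1 + \<epsilon>) * real (card E))"
proof -
  define D where "D = nat \<lceil>3/\<epsilon>\<rceil> + 10"
  define c where "c = 1 - 1 / exp (1::real)"
  define R where "R = nat \<lceil>(real D + 2) * c\<rceil>"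
  define K :: nat where "K = fact (D+1)"
  have e2: "2 \<le> exp (1::real)" using exp_ge_add_one_self[of 1] by simp
  have e3: "exp (1::real) \<le> 3" by (rule exp_le)
  have c1: "1/2 \<le> c" unfolding c_def using e2 by (simp add: field_simps)
  have c2: "c \<le> 2/3" unfolding c_def using e3 by (simp add: field_simps)
  have D3: "3/\<epsilon> \<le> real D" unfolding D_def by linarith
  have D10: "10 \<le> D" unfolding D_def by simp
  have Rlo: "(real D + 2) * c \<le> real R" unfolding R_def by linarith
  have Rhi: "real R \<le> (real D + 2) * c + 1" unfolding R_def
    using c1 by (simp add: of_nat_nat)
  have "12 * (1/2) \<le> (real D + 2) * c"
    using D10 c1 by (intro mult_mono) auto
  hence R1: "1 \<le> R" using Rlo by simp
  have RD: "R \<le> D" using Rhi c2 D10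
  proof -
    have "real R \<le> (real D + 2) * (2/3) + 1" using Rhi c2
      by (smt (verit) mult_left_mono of_nat_0_le_iff)
    moreover have "10 \<le> real D" using D10 by simp
    ultimately have "real R \<le> real D" by (simp add: field_simps)
    thus ?thesis by simp
  qed
  have Kpos: "0 < K" unfolding K_def by simp
  have dvK: "\<And>p. p < R \<Longrightarrow> (D+1-p) dvd K" unfolding K_def
    using RD by (intro dvd_fact) auto
  have "ln (real D + 2) - ln (real D + 2 - real R) \<le> (\<Sum>p<R. 1 / real (D+1-p))"
    using harm[of R D] RD by simp
  moreover have "ln (real D + 2 - real R) \<le> ln (real D + 2) - 1"
  proof -
    have "real D + 2 - real R \<le> (real D + 2) / exp 1"
      using Rlo unfolding c_def by (simp add: field_simps)
    moreover have "0 < real D + 2 - real R" using RD by simp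
    ultimately have "ln (real D + 2 - real R) \<le> ln ((real D + 2) / exp 1)" by simp
    also have "\<dots> = ln (real D + 2) - 1" by (simp add: ln_div)
    finally show ?thesis .
  qed
  ultimately have H: "1 \<le> (\<Sum>p<R. 1 / real (D+1-p))" by simp
  have "real (card (Dset D R K)) = (\<Sum>p<R. real (K div (D+1-p)))"
    by (simp add: card_Dset)
  also have "\<dots> = (\<Sum>p<R. real K * (1 / real (D+1-p)))"
  proof (rule sum.cong)
    fix p assume "p \<in> {..<R}"
    hence "(D+1-p) dvd K" using dvK by simp
    from real_of_nat_div[OF this] show "real (K div (D+1-p)) = real K * (1 / real (D+1-p))" by simp
  qed simp
  also have "\<dots> = real K * (\<Sum>p<R. 1 / real (D+1-p))" by (simp add: sum_distrib_left)
  also have "\<dots> \<ge> real K" using H Kpos by simp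
  finally have Kcard: "K \<le> card (Dset D R K)" by simp
  interpret constr D R K using R1 RD dvK Kcard by unfold_locales auto
  have ratio: "real R \<le> (c + \<epsilon>) * real D"
  proof -
    have "\<epsilon> * real D \<ge> 3" using D3 assms by (simp add: field_simps)
    thus ?thesis using Rhi c2 by (simp add: algebra_simps)
  qed
  show ?thesis
  proof (rule exI[of _ V], rule exI[of _ E], rule exI[of _ K], intro conjI allI impI)
    show "simple_graph V E" "bipartite V E" using props by auto
    show "E \<noteq> {}" using card_Edges[of D R K] Kpos D10 by (metis card.empty mult_is_0 not_gr0 not_numeral_le_zero)
    show "0 < K" by (rule Kpos)
    show "\<exists>C\<subseteq>V. card C = K \<and> vertex_cover E C" using props by blast
  next
    fix vs assume "greedy_run V E vs \<and> length vs = K"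
    hence "set vs \<subseteq> DD" using greedy_in_D by simp
    hence "real (card (covered E (set vs))) \<le> real K * real R"
      using covered_bound by (metis of_nat_le_iff of_nat_mult)
    also have "\<dots> \<le> real K * ((c + \<epsilon>) * real D)" using ratio by (simp add: mult_left_mono)
    also have "\<dots> = (1 - 1 / exp 1 + \<epsilon>) * real (card E)"
      by (simp add: card_Edges c_def)
    finally show "real (card (covered E (set vs))) \<le> (1 - 1 / exp 1 + \<epsilon>) * real (card E)" .
  qed
qed

end
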